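(* For every convex pentagon $K$ we have $\Omega(K)<2\Delta(K)$. Moreover, the constant $2$ cannot be replaced by a smaller one: for every $\eta<2$ there exists a convex pentagon $K$ with $\Omega(K)>\eta\,\Delta(K)$.
   Context: For a convex pentagon $K=A_1A_2A_3A_4A_5$ (indices modulo $5$), $\Omega(K)=\sum_{k=1}^5\Delta(A_kA_{k+1}A_{k+2})$ is the sum of the areas of the five triangles formed by three consecutive vertices. $\Delta(\cdot)$ denotes area. *)

theory Defs
  imports "HOL-Analysis.Analysis"
begin

text \<open>Signed (doubled) orientation of an ordered triple of points in the plane.\<close>
definition orient :: "real^2 \<Rightarrow> real^2 \<Rightarrow> real^2 \<Rightarrow> real" where
  "orient a b c = (b$1 - a$1) * (c$2 - a$2) - (b$2 - a$2) * (c$1 - a$1)"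

text \<open>A pentagon is given by its vertices A 0, ..., A 4 (indices taken modulo 5).
  It is a convex pentagon iff the vertices are listed in cyclic order along the
  boundary of a strictly convex polygon, i.e. every ordered triple A i, A j, A k
  with i < j < k < 5 has the same (nonzero) orientation.\<close>
definition convex_pentagon :: "(nat \<Rightarrow> real^2) \<Rightarrow> bool" where
  "convex_pentagon A \<longleftrightarrow>
     (\<forall>i j k. i < j \<and> j < k \<and> k < 5 \<longrightarrow> orient (A i) (A j) (A k) > 0) \<or>
     (\<forall>i j k. i < j \<and> j < k \<and> k < 5 \<longrightarrow> orient (A i) (A j) (A k) < 0)"

definition pent_area :: "(nat \<Rightarrow> real^2) \<Rightarrow> real" where
  "pent_area A = measure lebesgue (convex hull {A 0, A 1, A 2, A 3, A 4})"

definition tri_area :: "real^2 \<Rightarrow> real^2 \<Rightarrow> real^2 \<Rightarrow> real" where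
  "tri_area a b c = measure lebesgue (convex hull {a, b, c})"

definition Omega :: "(nat \<Rightarrow> real^2) \<Rightarrow> real" where
  "Omega A = (\<Sum>k<5. tri_area (A (k mod 5)) (A ((k + 1) mod 5)) (A ((k + 2) mod 5)))"

end

theory Submission
  imports Defs
begin

lemma orient_cyc: "orient a b c = orient b c a"
  by (simp add: orient_def algebra_simps)
lemma orient_swap: "orient a c b = - orient a b c"
  by (simp add: orient_def algebra_simps)

lemma tri_area_eq: "tri_area a b c = \<bar>orient a b c\<bar> / 2"
proof -
  have c: "compact (convex hull {a, b, c})"
    by (intro finite_imp_compact_convex_hull) auto
  have "tri_area a b c = measure lborel (convex hull {a, b, c})"
    unfolding tri_area_def using c
    by (intro measure_completion) (auto dest: compact_imp_closed)
  also have "\<dots> = \<bar>orient a b c\<bar> / 2"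
    by (subst content_triangle) (simp add: orient_def abs_minus_commute algebra_simps)
  finally show ?thesis .
qed

lemma orient_affine:
  "orient a b (u *\<^sub>R x + v *\<^sub>R y) = u * orient a b x + v * orient a b y" if "u + v = 1"
proof -
  have v: "v = 1 - u" using that by simp
  show ?thesis unfolding v by (simp add: orient_def algebra_simps)
qed

lemma convex_halfplane: "convex {x. orient a b x \<ge> 0}"
  unfolding convex_def
  by (auto simp: orient_affine intro!: add_nonneg_nonneg mult_nonneg_nonneg)

lemma convex_halfplane': "convex {x. orient a b x \<le> 0}"
  unfolding convex_def
  by (auto simp: orient_affine intro!: add_nonpos_nonpos mult_nonneg_nonpos)

lemma in_tri:
  assumes D: "orient a b c > 0" and "orient b c x \<ge> 0" "orient c a x \<ge> 0" "orient a b x \<ge> 0"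
  shows "x \<in> convex hull {a, b, c}"
proof -
  define D where "D = orient a b c"
  define u where "u = orient b c x / D"
  define v where "v = orient c a x / D"
  define w where "w = orient a b x / D"
  have Dp: "D > 0" using D D_def by simp
  have s: "orient b c x + orient c a x + orient a b x = D"
    unfolding D_def orient_def by (simp add: algebra_simps)
  have sum1: "u + v + w = 1" unfolding u_def v_def w_def using Dp s
    by (simp add: add_divide_distrib[symmetric])
  have e1: "D * x$1 = orient b c x * a$1 + orient c a x * b$1 + orient a b x * c$1"
    unfolding D_def orient_def by algebra
  have e2: "D * x$2 = orient b c x * a$2 + orient c a x * b$2 + orient a b x * c$2"
    unfolding D_def orient_def by algebra
  have xe: "x = u *\<^sub>R a + v *\<^sub>R b + w *\<^sub>R c"
    unfolding vec_eq_iff forall_2 u_def v_def w_def using Dp e1 e2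
    by (simp add: field_simps)
  have "u \<ge> 0" "v \<ge> 0" "w \<ge> 0" unfolding u_def v_def w_def using Dp assms by auto
  then show ?thesis unfolding convex_hull_3 using sum1 xe by blast
qed

lemma orient_anti: "orient a b c = - orient b a c"
  by (simp add: orient_def algebra_simps)

lemma orient_triv[simp]: "orient a b a = 0" "orient a b b = 0" "orient a a b = 0"
  by (simp_all add: orient_def)

lemma negligible_line:
  assumes "a \<noteq> b" shows "negligible {x. orient a b x = 0}"
proof -
  define n :: "real^2" where "n = (\<chi> i. if i = 1 then -(b$2-a$2) else b$1-a$1)"
  have n1: "n$1 = -(b$2-a$2)" and n2: "n$2 = b$1-a$1" by (simp_all add: n_def)
  have "n \<noteq> 0"
  proof
    assume "n = 0"
    then have "b$1 = a$1" "b$2 = a$2" using n1 n2 by auto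
    then have "a = b" by (simp add: vec_eq_iff forall_2)
    then show False using assms by simp
  qed
  moreover have "{x. orient a b x = 0} = {x. n \<bullet> x = n \<bullet> a}"
    by (auto simp: inner_vec_def sum_2 n1 n2 orient_def algebra_simps)
  ultimately show ?thesis using negligible_hyperplane by auto
qed

lemma hull_halfplane_le:
  assumes "\<forall>p\<in>P. orient a b p \<le> 0" shows "convex hull P \<subseteq> {x. orient a b x \<le> 0}"
  using assms by (intro hull_minimal convex_halfplane') auto

lemma hull_halfplane_ge:
  assumes "\<forall>p\<in>P. orient a b p \<ge> 0" shows "convex hull P \<subseteq> {x. orient a b x \<ge> 0}"
  using assms by (intro hull_minimal convex_halfplane) auto

lemma orient_pos_neq: "orient a b c > 0 \<Longrightarrow> a \<noteq> c"
  by auto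

lemma pent_area_pts:
  fixes a0 a1 a2 a3 a4 :: "real^2"
  assumes o: "orient a0 a1 a2 > 0" "orient a0 a1 a3 > 0" "orient a0 a1 a4 > 0" "orient a0 a2 a3 > 0"
   "orient a0 a2 a4 > 0" "orient a0 a3 a4 > 0" "orient a1 a2 a3 > 0" "orient a1 a2 a4 > 0"
   "orient a1 a3 a4 > 0" "orient a2 a3 a4 > 0"
  shows "measure lebesgue (convex hull {a0, a1, a2, a3, a4}) = (orient a0 a1 a2 + orient a0 a2 a3 + orient a0 a3 a4) / 2"
proof -
  define T1 where "T1 = convex hull {a0, a1, a2}"
  define T2 where "T2 = convex hull {a0, a2, a3}"
  define T3 where "T3 = convex hull {a0, a3, a4}"
  define H where "H = convex hull {a0, a1, a2, a3, a4}"
  have m: "T1 \<in> lmeasurable" "T2 \<in> lmeasurable" "T3 \<in> lmeasurable"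
    unfolding T1_def T2_def T3_def
    by (auto intro!: lmeasurable_compact finite_imp_compact_convex_hull)
  have T1le: "T1 \<subseteq> {x. orient (a0) (a2) x \<le> 0}" unfolding T1_def
    by (rule hull_halfplane_le) (use o in \<open>auto simp: orient_swap[of "a0" "a2" "a1"]\<close>)
  have T2ge: "T2 \<subseteq> {x. orient (a0) (a2) x \<ge> 0}" unfolding T2_def
    by (rule hull_halfplane_ge) (use o in auto)
  have T3ge: "T3 \<subseteq> {x. orient (a0) (a2) x \<ge> 0}" unfolding T3_def
    by (rule hull_halfplane_ge) (use o in auto)
  have T2le: "T2 \<subseteq> {x. orient (a0) (a3) x \<le> 0}" unfolding T2_def
    by (rule hull_halfplane_le) (use o in \<open>auto simp: orient_swap[of "a0" "a3" "a2"]\<close>)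
  have T3ge': "T3 \<subseteq> {x. orient (a0) (a3) x \<ge> 0}" unfolding T3_def
    by (rule hull_halfplane_ge) (use o in auto)
  have n02: "negligible {x. orient (a0) (a2) x = 0}" by (rule negligible_line) (use o in auto)
  have n03: "negligible {x. orient (a0) (a3) x = 0}" by (rule negligible_line) (use o in auto)
  have neg: "negligible (T1 \<inter> T2)" "negligible (T1 \<inter> T3)" "negligible (T2 \<inter> T3)"
    using negligible_subset[OF n02, of "T1 \<inter> T2"] negligible_subset[OF n02, of "T1 \<inter> T3"]
      negligible_subset[OF n03, of "T2 \<inter> T3"] T1le T2ge T3ge T2le T3ge' by force+
  have sub1: "T1 \<union> T2 \<union> T3 \<subseteq> H" unfolding T1_def T2_def T3_def H_def
    by (intro Un_least hull_mono) auto
  define S where "S = {x. orient (a0) (a1) x \<ge> 0} \<inter> {x. orient (a1) (a2) x \<ge> 0} \<inter> {x. orient (a2) (a3) x \<ge> 0}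
     \<inter> {x. orient (a3) (a4) x \<ge> 0} \<inter> {x. orient (a4) (a0) x \<ge> 0}"
  have cyc: "orient a4 a0 a1 = orient a0 a1 a4" "orient a4 a0 a2 = orient a0 a2 a4" "orient a4 a0 a3 = orient a0 a3 a4"
     "orient a3 a4 a0 = orient a0 a3 a4" "orient a3 a4 a1 = orient a1 a3 a4" "orient a3 a4 a2 = orient a2 a3 a4"
     "orient a2 a3 a0 = orient a0 a2 a3" "orient a2 a3 a1 = orient a1 a2 a3" "orient a2 a3 a4 = orient a2 a3 a4"
     "orient a1 a2 a0 = orient a0 a1 a2" "orient a1 a2 a3 = orient a1 a2 a3" "orient a1 a2 a4 = orient a1 a2 a4"
    unfolding orient_def by (simp_all add: algebra_simps)
  have HS: "H \<subseteq> S" unfolding H_def S_def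
    by (intro hull_minimal convex_Int convex_halfplane) (use o cyc in auto)
  have ST: "S \<subseteq> T1 \<union> T2 \<union> T3"
  proof
    fix x assume "x \<in> S"
    then have s: "orient (a0) (a1) x \<ge> 0" "orient (a1) (a2) x \<ge> 0" "orient (a2) (a3) x \<ge> 0" "orient (a3) (a4) x \<ge> 0" "orient (a4) (a0) x \<ge> 0"
      unfolding S_def by auto
    show "x \<in> T1 \<union> T2 \<union> T3"
    proof (cases "orient (a0) (a2) x \<le> 0")
      case True
      have "x \<in> T1" unfolding T1_def
        by (rule in_tri) (use o s True in \<open>auto simp: orient_anti[of a2 a0 x]\<close>)
      then show ?thesis by auto
    next
      case F1: False
      show ?thesis
      proof (cases "orient (a0) (a3) x \<le> 0")
        case True
        have "x \<in> T2" unfolding T2_def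
          by (rule in_tri) (use o s True F1 in \<open>auto simp: orient_anti[of a3 a0 x]\<close>)
        then show ?thesis by auto
      next
        case False
        have "x \<in> T3" unfolding T3_def
          by (rule in_tri) (use o s False in auto)
        then show ?thesis by auto
      qed
    qed
  qed
  have "T1 \<union> T2 \<union> T3 = H" using sub1 HS ST by blast
  from measure_Un3_negligible[OF m neg this]
  have "measure lebesgue H = tri_area (a0) (a1) (a2) + tri_area (a0) (a2) (a3) + tri_area (a0) (a3) (a4)"
    unfolding T1_def T2_def T3_def tri_area_def .
  then show ?thesis unfolding H_def tri_area_eq using o by simp
qed



lemma ineq_pts:
  fixes a0 a1 a2 a3 a4 :: "real^2"
  assumes o: "orient a0 a1 a2 > 0" "orient a0 a1 a3 > 0" "orient a0 a1 a4 > 0" "orient a0 a2 a3 > 0"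
   "orient a0 a2 a4 > 0" "orient a0 a3 a4 > 0" "orient a1 a2 a3 > 0" "orient a1 a2 a4 > 0"
   "orient a1 a3 a4 > 0" "orient a2 a3 a4 > 0"
  shows "(\<bar>orient a0 a1 a2\<bar> + \<bar>orient a1 a2 a3\<bar> + \<bar>orient a2 a3 a4\<bar> + \<bar>orient a3 a4 a0\<bar> + \<bar>orient a4 a0 a1\<bar>) / 2
     < 2 * measure lebesgue (convex hull {a0, a1, a2, a3, a4})"
proof -
  have c1: "orient a3 a4 a0 = orient a0 a3 a4" "orient a4 a0 a1 = orient a0 a1 a4"
    unfolding orient_def by (simp_all add: algebra_simps)
  define T where "T = orient a0 a2 a4 + orient a0 a1 a3 - orient a0 a1 a4"
  have key: "2 * (orient a0 a1 a2 + orient a0 a2 a3 + orient a0 a3 a4) -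
     (orient a0 a1 a2 + orient a1 a2 a3 + orient a2 a3 a4 + orient a0 a3 a4 + orient a0 a1 a4) = T"
    unfolding T_def orient_def by algebra
  have id: "T * orient a1 a3 a4 = orient a2 a3 a4 * orient a0 a1 a3 + orient a1 a2 a4 * orient a1 a3 a4
     - orient a1 a2 a3 * (orient a0 a1 a3 - orient a0 a1 a4)"
    unfolding T_def orient_def by algebra
  have "T > 0"
  proof (cases "orient a0 a1 a3 - orient a0 a1 a4 > 0")
    case True then show ?thesis unfolding T_def using o by linarith
  next
    case False
    have "orient a1 a2 a3 * (orient a0 a1 a3 - orient a0 a1 a4) \<le> 0"
      using False o by (intro mult_nonneg_nonpos) auto
    moreover have "orient a2 a3 a4 * orient a0 a1 a3 > 0" "orient a1 a2 a4 * orient a1 a3 a4 > 0"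
      using o by auto
    ultimately have "T * orient a1 a3 a4 > 0" unfolding id by linarith
    then show ?thesis using o zero_less_mult_pos2 by blast
  qed
  then show ?thesis unfolding pent_area_pts[OF o] c1 using o key by simp
qed

lemma Omega_eq: "Omega A = (\<bar>orient (A 0) (A 1) (A 2)\<bar> + \<bar>orient (A 1) (A 2) (A 3)\<bar> + \<bar>orient (A 2) (A 3) (A 4)\<bar>
   + \<bar>orient (A 3) (A 4) (A 0)\<bar> + \<bar>orient (A 4) (A 0) (A 1)\<bar>) / 2"
proof -
  have e: "{..<5::nat} = {0,1,2,3,4}" by auto
  show ?thesis unfolding Omega_def tri_area_eq e by (simp add: add_divide_distrib numeral_2_eq_2)
qed

lemma pent_eq: "pent_area A = measure lebesgue (convex hull {A 0, A 1, A 2, A 3, A 4})"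
  unfolding pent_area_def ..

lemma part1: assumes "convex_pentagon A" shows "Omega A < 2 * pent_area A"
proof -
  have "(\<forall>i j k. i < j \<and> j < k \<and> k < 5 \<longrightarrow> orient (A i) (A j) (A k) > 0) \<or>
     (\<forall>i j k. i < j \<and> j < k \<and> k < 5 \<longrightarrow> orient (A i) (A j) (A k) < 0)"
    using assms unfolding convex_pentagon_def .
  then show ?thesis
  proof
    assume pos: "\<forall>i j k. i < j \<and> j < k \<and> k < 5 \<longrightarrow> orient (A i) (A j) (A k) > 0"
    show ?thesis unfolding Omega_eq pent_eq
      apply (rule ineq_pts)
      using pos[rule_format, of 0 1 2] pos[rule_format, of 0 1 3] pos[rule_format, of 0 1 4]
        pos[rule_format, of 0 2 3] pos[rule_format, of 0 2 4] pos[rule_format, of 0 3 4]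
        pos[rule_format, of 1 2 3] pos[rule_format, of 1 2 4] pos[rule_format, of 1 3 4]
        pos[rule_format, of 2 3 4] by simp_all
  next
    assume neg: "\<forall>i j k. i < j \<and> j < k \<and> k < 5 \<longrightarrow> orient (A i) (A j) (A k) < 0"
    have r: "\<And>a b c. orient c b a = - orient a b c" unfolding orient_def by (simp add: algebra_simps)
    have ra: "\<And>a b c. \<bar>orient c b a\<bar> = \<bar>orient a b c\<bar>" by (metis r abs_minus_cancel)
    have "(\<bar>orient (A 4) (A 3) (A 2)\<bar> + \<bar>orient (A 3) (A 2) (A 1)\<bar> + \<bar>orient (A 2) (A 1) (A 0)\<bar>
       + \<bar>orient (A 1) (A 0) (A 4)\<bar> + \<bar>orient (A 0) (A 4) (A 3)\<bar>) / 2
       < 2 * measure lebesgue (convex hull {A 4, A 3, A 2, A 1, A 0})"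
      apply (rule ineq_pts)
      using neg[rule_format, of 0 1 2] neg[rule_format, of 0 1 3] neg[rule_format, of 0 1 4]
        neg[rule_format, of 0 2 3] neg[rule_format, of 0 2 4] neg[rule_format, of 0 3 4]
        neg[rule_format, of 1 2 3] neg[rule_format, of 1 2 4] neg[rule_format, of 1 3 4]
        neg[rule_format, of 2 3 4] r[of "A 2" "A 1" "A 0"] r[of "A 3" "A 1" "A 0"] r[of "A 4" "A 1" "A 0"]
        r[of "A 3" "A 2" "A 0"] r[of "A 4" "A 2" "A 0"] r[of "A 4" "A 3" "A 0"] r[of "A 3" "A 2" "A 1"]
        r[of "A 4" "A 2" "A 1"] r[of "A 4" "A 3" "A 1"] r[of "A 4" "A 3" "A 2"] by simp_all
    moreover have "{A 4, A 3, A 2, A 1, A 0} = {A 0, A 1, A 2, A 3, A 4}" by auto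
    ultimately show ?thesis unfolding Omega_eq pent_eq
      using ra[of "A 4" "A 3" "A 2"] ra[of "A 3" "A 2" "A 1"] ra[of "A 2" "A 1" "A 0"]
        ra[of "A 1" "A 0" "A 4"] ra[of "A 0" "A 4" "A 3"] by simp
  qed
qed


lemma enum10:
  assumes "P 0 1 2" "P 0 1 3" "P 0 1 4" "P 0 2 3" "P 0 2 4" "P 0 3 4" "P 1 2 3" "P 1 2 4" "P 1 3 4" "P 2 3 4"
  shows "\<forall>i j k. i < j \<and> j < k \<and> k < (5::nat) \<longrightarrow> P i j k"
proof (intro allI impI)
  fix i j k :: nat assume h: "i < j \<and> j < k \<and> k < 5"
  then have "k = 2 \<or> k = 3 \<or> k = 4" by auto
  moreover have "j = 1 \<or> j = 2 \<or> j = 3" using h by auto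
  moreover have "i = 0 \<or> i = 1 \<or> i = 2" using h by auto
  ultimately show "P i j k" using assms h by auto
qed

lemma part2:
  fixes \<eta> :: real assumes "\<eta> < 2"
  shows "\<exists>A. convex_pentagon A \<and> Omega A > \<eta> * pent_area A"
proof -
  define e :: real where "e = min (1/2) ((2 - \<eta>) / 4)"
  have e0: "e > 0" using assms by (auto simp: e_def)
  have e1: "e \<le> (2 - \<eta>) / 4" unfolding e_def by (rule min.cobounded2)
  define p0 :: "real^2" where "p0 = vector [e, -e]"
  define p1 :: "real^2" where "p1 = vector [1, 0]"
  define p2 :: "real^2" where "p2 = vector [0, 1]"
  define p3 :: "real^2" where "p3 = vector [-1, 0]"
  define p4 :: "real^2" where "p4 = vector [-e, -e]"
  define A where "A = (\<lambda>k::nat. if k = 0 then p0 else if k = 1 then p1 else if k = 2 then p2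
      else if k = 3 then p3 else p4)"
  have A: "A 0 = p0" "A 1 = p1" "A 2 = p2" "A 3 = p3" "A 4 = p4" by (simp_all add: A_def)
  have v: "orient p0 p1 p2 = 1" "orient p0 p1 p3 = 2 * e" "orient p0 p1 p4 = 2 * e^2"
    "orient p0 p2 p3 = 1 + 2 * e" "orient p0 p2 p4 = 2 * e * (1 + e)" "orient p0 p3 p4 = 2 * e^2"
    "orient p1 p2 p3 = 2" "orient p1 p2 p4 = 1 + 2 * e" "orient p1 p3 p4 = 2 * e" "orient p2 p3 p4 = 1"
    "orient p3 p4 p0 = 2 * e^2" "orient p4 p0 p1 = 2 * e^2"
    by (simp_all add: orient_def p0_def p1_def p2_def p3_def p4_def power2_eq_square algebra_simps)
  have o: "orient p0 p1 p2 > 0" "orient p0 p1 p3 > 0" "orient p0 p1 p4 > 0" "orient p0 p2 p3 > 0"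
   "orient p0 p2 p4 > 0" "orient p0 p3 p4 > 0" "orient p1 p2 p3 > 0" "orient p1 p2 p4 > 0"
   "orient p1 p3 p4 > 0" "orient p2 p3 p4 > 0"
    unfolding v using e0 by auto
  have cp: "convex_pentagon A"
    unfolding convex_pentagon_def
    by (rule disjI1, rule enum10) (use o in \<open>simp_all add: A A_def\<close>)
  have Om: "Omega A = 2 + 2 * e^2"
    unfolding Omega_eq A v by simp
  have Pa: "pent_area A = 1 + e + e^2"
    unfolding pent_eq A pent_area_pts[OF o] v by (simp add: algebra_simps)
  have "(2 - \<eta>) * 1 \<le> (2 - \<eta>) * (1 + e + e^2)"
    using assms e0 by (intro mult_left_mono) auto
  then have "Omega A > \<eta> * pent_area A" unfolding Om Pa using e1 assms
    by (simp add: algebra_simps power2_eq_square)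
  with cp show ?thesis by blast
qed

theorem lemma3p3:
  shows "(\<forall>A. convex_pentagon A \<longrightarrow> Omega A < 2 * pent_area A) \<and>
         (\<forall>\<eta>::real. \<eta> < 2 \<longrightarrow> (\<exists>A. convex_pentagon A \<and> Omega A > \<eta> * pent_area A))"
  using part1 part2 by blast

end
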